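(* Let $\mathbf C=\{C_t\}_{t\in[0,1]}$ and $\mathbf C'=\{C'_t\}_{t\in[0,1]}$ be two families of bivariate copulas such that $C_t\preceq C'_t$ for every $t\in[0,1]$. Then for all bivariate copulas $A$ and $B$, $A\star_{\mathbf C}B\preceq A\star_{\mathbf C'}B$ (concordance order of $3$-copulas).
   Context: A bivariate copula is a map $C:[0,1]^2\to[0,1]$ with $C(u,0)=C(0,u)=0$, $C(u,1)=C(1,u)=u$, and $2$-increasing. For bivariate copulas $C,C'$, $C\preceq C'$ means $C(u_1,u_2)\le C'(u_1,u_2)$ for all $(u_1,u_2)\in[0,1]^2$. For $3$-copulas $D,D'$ (distribution functions on $[0,1]^3$ with uniform $[0,1]$ one-dimensional marginals), $D\preceq D'$ means $D(\mathbf u)\le D'(\mathbf u)$ and $\overline D(\mathbf u)\le\overline{D'}(\mathbf u)$ for all $\mathbf u\in[0,1]^3$, where $\overline D(u_1,u_2,u_3)=1-u_1-u_2-u_3+D(u_1,u_2,1)+D(u_1,1,u_3)+D(1,u_2,u_3)-D(u_1,u_2,u_3)$. For bivariate copulas $A,B$ and a family $\mathbf C=\{C_t\}$ of bivariate copulas, $(A\star_{\mathbf C} B)(u_1,u_2,u_3)=\int_{0}^{u_2} C_t\!\left(\tfrac{\partial}{\partial t} A(u_1,t),\tfrac{\partial}{\partial t} B(t,u_3)\right) dt$ (partial derivatives existing a.e.); this is a $3$-copula. *)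

theory Defs
  imports "HOL-Analysis.Analysis"
begin

text \<open>Bivariate copula; only its values on the unit square are constrained.\<close>
definition copula2 :: "(real \<Rightarrow> real \<Rightarrow> real) \<Rightarrow> bool" where
  "copula2 C \<longleftrightarrow>
     (\<forall>u\<in>{0..1}. C u 0 = 0 \<and> C 0 u = 0 \<and> C u 1 = u \<and> C 1 u = u) \<and>
     (\<forall>u1\<in>{0..1}. \<forall>u2\<in>{0..1}. \<forall>v1\<in>{0..1}. \<forall>v2\<in>{0..1}.
        u1 \<le> u2 \<longrightarrow> v1 \<le> v2 \<longrightarrow> C u2 v2 - C u2 v1 - C u1 v2 + C u1 v1 \<ge> 0)"

definition copula2_le :: "(real \<Rightarrow> real \<Rightarrow> real) \<Rightarrow> (real \<Rightarrow> real \<Rightarrow> real) \<Rightarrow> bool" where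
  "copula2_le C C' \<longleftrightarrow> (\<forall>u1\<in>{0..1}. \<forall>u2\<in>{0..1}. C u1 u2 \<le> C' u1 u2)"

definition surv3 :: "(real \<Rightarrow> real \<Rightarrow> real \<Rightarrow> real) \<Rightarrow> real \<Rightarrow> real \<Rightarrow> real \<Rightarrow> real" where
  "surv3 D u1 u2 u3 = 1 - u1 - u2 - u3 + D u1 u2 1 + D u1 1 u3 + D 1 u2 u3 - D u1 u2 u3"

definition conc_le3 :: "(real \<Rightarrow> real \<Rightarrow> real \<Rightarrow> real) \<Rightarrow> (real \<Rightarrow> real \<Rightarrow> real \<Rightarrow> real) \<Rightarrow> bool" where
  "conc_le3 D D' \<longleftrightarrow> (\<forall>u1\<in>{0..1}. \<forall>u2\<in>{0..1}. \<forall>u3\<in>{0..1}.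
      D u1 u2 u3 \<le> D' u1 u2 u3 \<and> surv3 D u1 u2 u3 \<le> surv3 D' u1 u2 u3)"

text \<open>Derivative of a real function at a point where it exists (0 elsewhere; a null set for copula sections).\<close>
definition deriv_ae :: "(real \<Rightarrow> real) \<Rightarrow> real \<Rightarrow> real" where
  "deriv_ae f t = (if f differentiable (at t) then deriv f t else 0)"

definition star_prod :: "(real \<Rightarrow> real \<Rightarrow> real \<Rightarrow> real) \<Rightarrow> (real \<Rightarrow> real \<Rightarrow> real)
     \<Rightarrow> (real \<Rightarrow> real \<Rightarrow> real) \<Rightarrow> real \<Rightarrow> real \<Rightarrow> real \<Rightarrow> real" where
  "star_prod C A B u1 u2 u3 =
     integral\<^sup>L (lebesgue_on {0..u2})
       (\<lambda>t. C t (deriv_ae (\<lambda>s. A u1 s) t) (deriv_ae (\<lambda>s. B s u3) t))"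

end

theory Submission
  imports Defs
begin


lemma cop_2inc:
  assumes "copula2 K" "u1\<in>{0..1}" "u2\<in>{0..1}" "v1\<in>{0..1}" "v2\<in>{0..1}" "u1 \<le> u2" "v1 \<le> v2"
  shows "K u2 v2 - K u2 v1 - K u1 v2 + K u1 v1 \<ge> 0"
  using assms unfolding copula2_def by blast

lemma cop_bd:
  assumes "copula2 K" "u\<in>{0..1}"
  shows "K u 0 = 0" "K 0 u = 0" "K u 1 = u" "K 1 u = u"
  using assms unfolding copula2_def by auto

lemma cop_lip1:
  assumes K: "copula2 K" and u: "u\<in>{0..1}" "u'\<in>{0..1}" "u \<le> u'" and v: "v\<in>{0..1}"
  shows "K u v \<le> K u' v" "K u' v - K u v \<le> u' - u"
proof -
  have "K u' v - K u' 0 - K u v + K u 0 \<ge> 0" using cop_2inc[OF K u(1,2), of 0 v] u v by auto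
  then show "K u v \<le> K u' v" using cop_bd[OF K] u by auto
  have "K u' 1 - K u' v - K u 1 + K u v \<ge> 0" using cop_2inc[OF K u(1,2), of v 1] u v by auto
  then show "K u' v - K u v \<le> u' - u" using cop_bd[OF K] u by auto
qed

lemma cop_lip2:
  assumes K: "copula2 K" and u: "u\<in>{0..1}" "u'\<in>{0..1}" "u \<le> u'" and v: "v\<in>{0..1}"
  shows "K v u \<le> K v u'" "K v u' - K v u \<le> u' - u"
proof -
  have "K v u' - K v u - K 0 u' + K 0 u \<ge> 0" using cop_2inc[OF K _ v u(1,2)] u v by auto
  then show "K v u \<le> K v u'" using cop_bd[OF K] u by auto
  have "K 1 u' - K 1 u - K v u' + K v u \<ge> 0" using cop_2inc[OF K v _ u(1,2)] u v by auto
  then show "K v u' - K v u \<le> u' - u" using cop_bd[OF K] u by auto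
qed

lemma cop_abs1:
  assumes K: "copula2 K" and "u\<in>{0..1}" "u'\<in>{0..1}" "v\<in>{0..1}"
  shows "\<bar>K u v - K u' v\<bar> \<le> \<bar>u - u'\<bar>"
  using cop_lip1[OF K, of u u' v] cop_lip1[OF K, of u' u v] assms by (cases "u \<le> u'") auto

lemma cop_abs2:
  assumes K: "copula2 K" and "u\<in>{0..1}" "u'\<in>{0..1}" "v\<in>{0..1}"
  shows "\<bar>K v u - K v u'\<bar> \<le> \<bar>u - u'\<bar>"
  using cop_lip2[OF K, of u u' v] cop_lip2[OF K, of u' u v] assms by (cases "u \<le> u'") auto

lemma cop_abs:
  assumes K: "copula2 K" and "u\<in>{0..1}" "u'\<in>{0..1}" "v\<in>{0..1}" "v'\<in>{0..1}"
  shows "\<bar>K u v - K u' v'\<bar> \<le> \<bar>u - u'\<bar> + \<bar>v - v'\<bar>"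
  using cop_abs1[OF K, of u u' v] cop_abs2[OF K, of v v' u'] assms by auto

lemma cop_range:
  assumes K: "copula2 K" and "u\<in>{0..1}" "v\<in>{0..1}"
  shows "0 \<le> K u v" "K u v \<le> 1"
  using cop_lip1[OF K, of 0 u v] cop_lip1[OF K, of u 1 v] cop_bd[OF K] assms by auto

lemma deriv_range:
  fixes f :: "real \<Rightarrow> real"
  assumes mono: "\<And>x y. x\<in>{0..1} \<Longrightarrow> y\<in>{0..1} \<Longrightarrow> x \<le> y \<Longrightarrow> f x \<le> f y"
    and lip: "\<And>x y. x\<in>{0..1} \<Longrightarrow> y\<in>{0..1} \<Longrightarrow> x \<le> y \<Longrightarrow> f y - f x \<le> y - x"
    and t: "t \<in> {0<..<1}"
  shows "deriv_ae f t \<in> {0..1}"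
proof (cases "f differentiable (at t)")
  case True
  hence "DERIV f t :> deriv f t" using DERIV_deriv_iff_real_differentiable by blast
  hence L: "((\<lambda>h. (f (t + h) - f t) / h) \<longlongrightarrow> deriv f t) (at_right 0)"
    unfolding DERIV_def using filterlim_at_split by blast
  have ev: "\<forall>\<^sub>F h in at_right 0. 0 \<le> (f (t + h) - f t) / h \<and> (f (t + h) - f t) / h \<le> 1"
  proof -
    have "\<forall>\<^sub>F h in at_right (0::real). h < 1 - t \<and> 0 < h" using t
      using eventually_at_right_real[of 0 "1-t"] by (auto elim: eventually_mono)
    then show ?thesis
    proof eventually_elim
      case (elim h)
      have a: "f t \<le> f (t+h)" "f (t+h) - f t \<le> h" using mono[of t "t+h"] lip[of t "t+h"] t elim by auto
      then show ?case using elim by (auto simp: divide_simps)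
    qed
  qed
  have "0 \<le> deriv f t" by (rule tendsto_lowerbound[OF L]) (use ev in \<open>auto elim: eventually_mono\<close>)
  moreover have "deriv f t \<le> 1" by (rule tendsto_upperbound[OF L]) (use ev in \<open>auto elim: eventually_mono\<close>)
  ultimately show ?thesis using True by (simp add: deriv_ae_def)
next
  case False
  then show ?thesis by (simp add: deriv_ae_def)
qed



definition Qd :: "(real \<Rightarrow> real) \<Rightarrow> real \<Rightarrow> real \<Rightarrow> real" where
  "Qd g t h = (g (t + h) - g t) / h"

definition Pc :: "(real \<Rightarrow> real) \<Rightarrow> real \<Rightarrow> bool" where
  "Pc g t \<longleftrightarrow> (\<forall>m::nat. \<exists>k::nat. \<forall>p q::rat. p \<noteq> 0 \<longrightarrow> q \<noteq> 0 \<longrightarrow>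
      \<bar>of_rat p\<bar> < 1/(real k+1) \<longrightarrow> \<bar>of_rat q\<bar> < 1/(real k+1) \<longrightarrow>
      \<bar>Qd g t (of_rat p) - Qd g t (of_rat q)\<bar> \<le> 1/(real m+1))"

lemma small_inv: "0 < (s::real) \<Longrightarrow> \<exists>k::nat. 1/(real k+1) < s"
  using reals_Archimedean[of s] by (auto simp: field_simps)

lemma diff_imp_Pc:
  fixes g :: "real \<Rightarrow> real"
  assumes "g differentiable at t"
  shows "Pc g t"
proof -
  obtain D where "DERIV g t :> D" using assms real_differentiable_def by blast
  hence L: "Qd g t \<midarrow>0\<rightarrow> D" unfolding DERIV_def Qd_def[abs_def] .
  show ?thesis unfolding Pc_def
  proof
    fix m :: nat
    have "(0::real) < 1/(2*(real m+1))" by auto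
    then obtain s where s: "s > 0" "\<And>x. x \<noteq> 0 \<and> norm (x - 0) < s \<Longrightarrow> norm (Qd g t x - D) < 1/(2*(real m+1))"
      using L unfolding LIM_eq by meson
    obtain k :: nat where k: "1/(real k+1) < s" using small_inv[OF s(1)] by blast
    have "\<bar>Qd g t (of_rat p) - Qd g t (of_rat q)\<bar> \<le> 1/(real m+1)"
      if "p \<noteq> 0" "q \<noteq> 0" "\<bar>of_rat p\<bar> < 1/(real k+1)" "\<bar>of_rat q\<bar> < 1/(real k+1)" for p q :: rat
    proof -
      have "\<bar>Qd g t (of_rat p) - D\<bar> < 1/(2*(real m+1))" using s(2)[of "of_rat p"] that k by auto
      moreover have "\<bar>Qd g t (of_rat q) - D\<bar> < 1/(2*(real m+1))" using s(2)[of "of_rat q"] that k by auto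
      moreover have "\<bar>Qd g t (of_rat p) - Qd g t (of_rat q)\<bar> \<le> \<bar>Qd g t (of_rat p) - D\<bar> + \<bar>Qd g t (of_rat q) - D\<bar>" by arith
      moreover have "1/(2*(real m+1)) + 1/(2*(real m+1)) = 1/(real m+1)" by (auto simp: field_simps)
      ultimately show ?thesis by (smt (verit))
    qed
    then show "\<exists>k::nat. \<forall>p q::rat. p \<noteq> 0 \<longrightarrow> q \<noteq> 0 \<longrightarrow>
      \<bar>of_rat p\<bar> < 1/(real k+1) \<longrightarrow> \<bar>of_rat q\<bar> < 1/(real k+1) \<longrightarrow>
      \<bar>Qd g t (of_rat p) - Qd g t (of_rat q)\<bar> \<le> 1/(real m+1)" by blast
  qed
qed

lemma Pc_imp_diff:
  fixes g :: "real \<Rightarrow> real"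
  assumes cont: "continuous_on UNIV g" and P: "Pc g t"
  shows "g differentiable at t"
proof -
  define s where "s n = Qd g t (1/(real n+1))" for n :: nat
  have sr: "s n = Qd g t (of_rat (1/(of_nat n+1)))" for n
    unfolding s_def by (simp add: of_rat_divide of_rat_add)
  have "Cauchy s"
    unfolding Cauchy_def
  proof (intro allI impI)
    fix e :: real assume "e > 0"
    then obtain m :: nat where m: "1/(real m+1) < e" using small_inv by blast
    obtain k where k: "\<forall>p q::rat. p \<noteq> 0 \<longrightarrow> q \<noteq> 0 \<longrightarrow>
      \<bar>of_rat p\<bar> < 1/(real k+1) \<longrightarrow> \<bar>of_rat q\<bar> < 1/(real k+1) \<longrightarrow>
      \<bar>Qd g t (of_rat p) - Qd g t (of_rat q)\<bar> \<le> 1/(real m+1)"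
      using P unfolding Pc_def by blast
    have "dist (s a) (s b) < e" if "a \<ge> k+1" "b \<ge> k+1" for a b
    proof -
      have "1/(real a+1) < 1/(real k+1)" "1/(real b+1) < 1/(real k+1)"
        using that by (auto simp: field_simps)
      hence "\<bar>s a - s b\<bar> \<le> 1/(real m+1)"
        unfolding sr using k[rule_format, of "1/(of_nat a+1)" "1/(of_nat b+1)"]
        by (simp add: of_rat_divide of_rat_add)
      then show ?thesis using m by (simp add: dist_real_def)
    qed
    then show "\<exists>M. \<forall>a\<ge>M. \<forall>b\<ge>M. dist (s a) (s b) < e" by blast
  qed
  then obtain L where sL: "s \<longlonglongrightarrow> L" using Cauchy_convergent_iff convergent_def by blast
  have bound: "\<exists>k::nat. \<forall>h. h \<noteq> 0 \<and> \<bar>h\<bar> < 1/(real k+1) \<longrightarrow> \<bar>Qd g t h - L\<bar> \<le> 1/(real m+1)" for m :: nat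
  proof -
    obtain k where k: "\<forall>p q::rat. p \<noteq> 0 \<longrightarrow> q \<noteq> 0 \<longrightarrow>
      \<bar>of_rat p\<bar> < 1/(real k+1) \<longrightarrow> \<bar>of_rat q\<bar> < 1/(real k+1) \<longrightarrow>
      \<bar>Qd g t (of_rat p) - Qd g t (of_rat q)\<bar> \<le> 1/(real m+1)"
      using P unfolding Pc_def by blast
    have rat: "\<bar>Qd g t (of_rat p) - L\<bar> \<le> 1/(real m+1)"
      if "p \<noteq> 0" "\<bar>of_rat p\<bar> < 1/(real k+1)" for p :: rat
    proof -
      have "(\<lambda>n. \<bar>Qd g t (of_rat p) - s n\<bar>) \<longlonglongrightarrow> \<bar>Qd g t (of_rat p) - L\<bar>"
        by (intro tendsto_intros sL)
      moreover have "\<forall>\<^sub>F n in sequentially. \<bar>Qd g t (of_rat p) - s n\<bar> \<le> 1/(real m+1)"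
        unfolding eventually_sequentially
      proof (intro exI[of _ "k+1"] allI impI)
        fix n assume "k + 1 \<le> n"
        hence "1/(real n+1) < 1/(real k+1)" by (auto simp: field_simps)
        then show "\<bar>Qd g t (of_rat p) - s n\<bar> \<le> 1/(real m+1)"
          unfolding sr using k[rule_format, of p "1/(of_nat n+1)"] that
          by (simp add: of_rat_divide of_rat_add)
      qed
      ultimately show ?thesis by (rule tendsto_upperbound) simp
    qed
    have "\<bar>Qd g t h - L\<bar> \<le> 1/(real m+1)" if h: "h \<noteq> 0" "\<bar>h\<bar> < 1/(real k+1)" for h
    proof (rule field_le_epsilon)
      fix e :: real assume e: "0 < e"
      have gc: "isCont (\<lambda>x. g (t + x)) h"
        using isCont_o2[where f="\<lambda>x. t + x" and a=h and g=g] cont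
        by (auto intro!: continuous_intros simp: continuous_on_eq_continuous_at)
      have "isCont (Qd g t) h"
        unfolding Qd_def[abs_def] using h gc
        by (intro continuous_intros) auto
      then obtain d where d: "d > 0" "\<And>x. x \<noteq> h \<and> norm (x - h) < d \<Longrightarrow> norm (Qd g t x - Qd g t h) < e"
        using e unfolding isCont_def LIM_eq by meson
      define d' where "d' = min d (min \<bar>h\<bar> (1/(real k+1) - \<bar>h\<bar>))"
      have d'p: "d' > 0" using d h by (auto simp: d'_def)
      obtain r where r: "r \<in> \<rat>" "h < r" "r < h + d'" using Rats_dense_in_real[of h "h+d'"] d'p by auto
      obtain q where q: "r = of_rat q" using r(1) Rats_cases by blast
      have rne: "r \<noteq> 0" and rlt: "\<bar>r\<bar> < 1/(real k+1)"
        using r h unfolding d'_def by (cases "h > 0"; auto)+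
      have "\<bar>Qd g t r - Qd g t h\<bar> < e" using d(2)[of r] r d'_def by auto
      moreover have "\<bar>Qd g t r - L\<bar> \<le> 1/(real m+1)" using rat[of q] q rne rlt by auto
      ultimately show "\<bar>Qd g t h - L\<bar> \<le> 1/(real m+1) + e" by linarith
    qed
    then show ?thesis by blast
  qed
  have "Qd g t \<midarrow>0\<rightarrow> L"
    unfolding LIM_eq
  proof (intro allI impI)
    fix r :: real assume "r > 0"
    then obtain m :: nat where m: "1/(real m+1) < r" using small_inv by blast
    obtain k where k: "\<forall>h. h \<noteq> 0 \<and> \<bar>h\<bar> < 1/(real k+1) \<longrightarrow> \<bar>Qd g t h - L\<bar> \<le> 1/(real m+1)"
      using bound by blast
    show "\<exists>s>0. \<forall>x. x \<noteq> 0 \<and> norm (x - 0) < s \<longrightarrow> norm (Qd g t x - L) < r"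
      using k m by (intro exI[of _ "1/(real k+1)"]) force
  qed
  hence "DERIV g t :> L" unfolding DERIV_def Qd_def[abs_def] .
  then show ?thesis using real_differentiable_def by blast
qed



lemma Pc_meas:
  fixes g :: "real \<Rightarrow> real"
  assumes cont: "continuous_on UNIV g"
  shows "Measurable.pred borel (Pc g)"
proof -
  have [measurable]: "g \<in> borel_measurable borel" using borel_measurable_continuous_onI[OF cont] .
  show ?thesis unfolding Pc_def[abs_def] Qd_def by measurable
qed

lemma seq_to_0: "filterlim (\<lambda>n::nat. 1/(real n+1)) (at (0::real)) sequentially"
proof -
  have "(\<lambda>n::nat. 1/(real n+1)) \<longlonglongrightarrow> 0"
    using LIMSEQ_inverse_real_of_nat by (simp add: inverse_eq_divide add.commute)
  moreover have "\<forall>\<^sub>F n in sequentially. 1/(real n+1) \<noteq> (0::real)" by simp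
  ultimately show ?thesis by (simp add: filterlim_at)
qed

lemma deriv_ae_meas:
  fixes g :: "real \<Rightarrow> real"
  assumes cont: "continuous_on UNIV g"
  shows "deriv_ae g \<in> borel_measurable borel"
proof (rule borel_measurable_LIMSEQ_real)
  have [measurable]: "g \<in> borel_measurable borel" using borel_measurable_continuous_onI[OF cont] .
  have [measurable]: "Measurable.pred borel (Pc g)" using Pc_meas[OF cont] .
  show "(\<lambda>t. if Pc g t then Qd g t (1/(real n+1)) else 0) \<in> borel_measurable borel" for n
    unfolding Qd_def by measurable
  fix t :: real
  show "(\<lambda>n. if Pc g t then Qd g t (1/(real n+1)) else 0) \<longlonglongrightarrow> deriv_ae g t"
  proof (cases "g differentiable at t")
    case True
    hence P: "Pc g t" using diff_imp_Pc by blast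
    have "DERIV g t :> deriv g t" using True DERIV_deriv_iff_real_differentiable by blast
    hence L: "Qd g t \<midarrow>0\<rightarrow> deriv g t" unfolding DERIV_def Qd_def[abs_def] .
    have "(\<lambda>n. Qd g t (1/(real n+1))) \<longlonglongrightarrow> deriv g t"
      by (rule filterlim_compose[OF L seq_to_0])
    then show ?thesis using P True by (simp add: deriv_ae_def)
  next
    case False
    hence "\<not> Pc g t" using Pc_imp_diff[OF cont] by blast
    then show ?thesis using False by (simp add: deriv_ae_def)
  qed
qed



lemma borel_to_lebesgue_on:
  fixes f :: "real \<Rightarrow> real"
  assumes "f \<in> borel_measurable borel"
  shows "f \<in> borel_measurable (lebesgue_on S)"
proof -
  have "f \<in> borel_measurable lborel" using assms by (simp add: measurable_cong_sets[OF sets_lborel refl])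
  hence "f \<in> borel_measurable lebesgue" by (rule measurable_completion)
  then show ?thesis by (rule measurable_restrict_space1)
qed

lemma endpoint_meas:
  fixes f h :: "real \<Rightarrow> real"
  assumes h: "h \<in> borel_measurable (lebesgue_on {0..1})" and eq: "\<And>t. t \<in> {0<..<1} \<Longrightarrow> f t = h t"
  shows "f \<in> borel_measurable (lebesgue_on {0..1})"
proof -
  have [measurable]: "h \<in> borel_measurable (lebesgue_on {0..1})" by fact
  have [measurable]: "(\<lambda>t::real. t) \<in> borel_measurable (lebesgue_on {0..1})"
    by (rule borel_to_lebesgue_on) simp
  have m: "(\<lambda>t. if t \<le> 0 then f 0 else if 1 \<le> t then f 1 else h t) \<in> borel_measurable (lebesgue_on {0..1})"
    by measurable
  show ?thesis
    by (rule measurable_cong[THEN iffD1, OF _ m]) (use eq in \<open>auto simp: space_restrict_space\<close>)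
qed

lemma deriv_ae_local:
  fixes f g :: "real \<Rightarrow> real"
  assumes "open S" "t \<in> S" "\<And>x. x \<in> S \<Longrightarrow> f x = g x"
  shows "deriv_ae f t = deriv_ae g t"
proof -
  have fg: "DERIV f t :> D \<longleftrightarrow> DERIV g t :> D" for D
    using has_field_derivative_transform_within_open[OF _ assms(1,2), of f D g]
      has_field_derivative_transform_within_open[OF _ assms(1,2), of g D f] assms(3) by auto
  show ?thesis
  proof (cases "f differentiable at t")
    case True
    hence "DERIV f t :> deriv f t" using DERIV_deriv_iff_real_differentiable by blast
    hence d: "DERIV g t :> deriv f t" using fg by blast
    hence "g differentiable at t" using real_differentiable_def by blast
    hence "DERIV g t :> deriv g t" using DERIV_deriv_iff_real_differentiable by blast
    hence "deriv g t = deriv f t" using d DERIV_unique by blast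
    then show ?thesis using True \<open>g differentiable at t\<close> by (simp add: deriv_ae_def)
  next
    case False
    hence "\<not> g differentiable at t" using fg real_differentiable_def by blast
    then show ?thesis using False by (simp add: deriv_ae_def)
  qed
qed

lemma deriv_ae_meas01:
  fixes f :: "real \<Rightarrow> real"
  assumes cont: "continuous_on {0..1} f"
  shows "deriv_ae f \<in> borel_measurable (lebesgue_on {0..1})"
proof -
  define g where "g x = f (max 0 (min 1 x))" for x
  have "continuous_on UNIV g"
    unfolding g_def
    by (rule continuous_on_compose2[OF cont]) (auto intro!: continuous_intros)
  hence "deriv_ae g \<in> borel_measurable (lebesgue_on {0..1})"
    using deriv_ae_meas borel_to_lebesgue_on by blast
  moreover have "deriv_ae f t = deriv_ae g t" if "t \<in> {0<..<1}" for t
    by (rule deriv_ae_local[of "{0<..<1}"]) (use that in \<open>auto simp: g_def\<close>)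
  ultimately show ?thesis using endpoint_meas by blast
qed

definition rnd :: "nat \<Rightarrow> real \<Rightarrow> real" where
  "rnd n x = of_int \<lfloor>(real n + 1) * x\<rfloor> / (real n + 1)"

lemma rnd_props:
  assumes "x \<in> {0..1}"
  shows "rnd n x \<in> {0..1}" "rnd n x \<le> x" "x - 1/(real n+1) \<le> rnd n x"
proof -
  have a: "of_int \<lfloor>(real n + 1) * x\<rfloor> \<le> (real n + 1) * x" "(real n + 1) * x < of_int \<lfloor>(real n + 1) * x\<rfloor> + 1"
    by linarith+
  have b: "0 \<le> \<lfloor>(real n + 1) * x\<rfloor>" using assms by auto
  have c: "(real n + 1) * x \<le> real n + 1" using assms by auto
  have p: "(0::real) < real n + 1" by simp
  have "0 \<le> rnd n x" unfolding rnd_def using b by simp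
  moreover have "of_int \<lfloor>(real n + 1) * x\<rfloor> \<le> real n + 1" using a(1) c by linarith
  hence "rnd n x \<le> 1" unfolding rnd_def by (simp only: divide_le_eq_1_pos[OF p])
  ultimately show "rnd n x \<in> {0..1}" by simp
  show "rnd n x \<le> x" unfolding rnd_def using a p by (simp add: divide_le_eq mult.commute)
  have "x - 1/(real n+1) = ((real n + 1) * x - 1) / (real n + 1)" using p by (simp add: field_simps)
  also have "\<dots> \<le> rnd n x" unfolding rnd_def using a p by (intro divide_right_mono) auto
  finally show "x - 1/(real n+1) \<le> rnd n x" .
qed

lemma inv_seq: "(\<lambda>n::nat. 1/(real n+1)) \<longlonglongrightarrow> 0"
  using LIMSEQ_inverse_real_of_nat by (simp add: inverse_eq_divide add.commute)

lemma cara: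
  fixes C :: "real \<Rightarrow> real \<Rightarrow> real \<Rightarrow> real" and a b :: "real \<Rightarrow> real"
  assumes cop: "\<forall>t\<in>{0..1}. copula2 (C t)"
    and Cm: "\<forall>u v. (\<lambda>t. C t u v) \<in> borel_measurable (lebesgue_on {0..1})"
    and am[measurable]: "a \<in> borel_measurable (lebesgue_on {0..1})"
    and bm[measurable]: "b \<in> borel_measurable (lebesgue_on {0..1})"
    and ar: "\<And>t. a t \<in> {0..1}" and br: "\<And>t. b t \<in> {0..1}"
  shows "(\<lambda>t. C t (a t) (b t)) \<in> borel_measurable (lebesgue_on {0..1})"
proof (rule borel_measurable_LIMSEQ_real)
  fix n :: nat
  define k where "k t = (\<lfloor>(real n + 1) * a t\<rfloor>, \<lfloor>(real n + 1) * b t\<rfloor>)" for t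
  define F where "F ij t = C t (of_int (fst ij) / (real n + 1)) (of_int (snd ij) / (real n + 1))" for ij :: "int \<times> int" and t
  have km: "k \<in> measurable (lebesgue_on {0..1}) (count_space UNIV)"
  proof (subst measurable_count_space_eq2_countable, intro conjI ballI)
    show "k \<in> space (lebesgue_on {0..1}) \<rightarrow> UNIV" by simp
    fix ij :: "int \<times> int"
    have "k -` {ij} \<inter> space (lebesgue_on {0..1}) =
      {t \<in> space (lebesgue_on {0..1}). of_int (fst ij) \<le> (real n + 1) * a t \<and> (real n + 1) * a t < of_int (fst ij) + 1
         \<and> of_int (snd ij) \<le> (real n + 1) * b t \<and> (real n + 1) * b t < of_int (snd ij) + 1}"
      unfolding k_def by (cases ij) (auto simp: floor_eq_iff)
    also have "\<dots> \<in> sets (lebesgue_on {0..1})" by measurable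
    finally show "k -` {ij} \<inter> space (lebesgue_on {0..1}) \<in> sets (lebesgue_on {0..1})" .
  qed
  have "(\<lambda>t. F (k t) t) \<in> borel_measurable (lebesgue_on {0..1})"
    by (rule measurable_compose_countable[OF _ km]) (use Cm in \<open>simp add: F_def\<close>)
  then show "(\<lambda>t. C t (rnd n (a t)) (rnd n (b t))) \<in> borel_measurable (lebesgue_on {0..1})"
    by (simp add: F_def k_def rnd_def)
next
  fix t assume "t \<in> space (lebesgue_on {0..1::real})"
  hence t: "t \<in> {0..1}" by (simp add: space_restrict_space)
  have K: "copula2 (C t)" using cop t by blast
  have bd: "\<bar>C t (rnd n (a t)) (rnd n (b t)) - C t (a t) (b t)\<bar> \<le> 2/(real n+1)" for n
  proof -
    have "\<bar>C t (rnd n (a t)) (rnd n (b t)) - C t (a t) (b t)\<bar> \<le> \<bar>rnd n (a t) - a t\<bar> + \<bar>rnd n (b t) - b t\<bar>"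
      by (rule cop_abs[OF K rnd_props(1)[OF ar] ar rnd_props(1)[OF br] br])
    also have "\<dots> \<le> 1/(real n+1) + 1/(real n+1)" using rnd_props[OF ar[of t], of n] rnd_props[OF br[of t], of n] by auto
    finally show ?thesis by simp
  qed
  have bd2: "C t (a t) (b t) - 2 * (1/(real n+1)) \<le> C t (rnd n (a t)) (rnd n (b t)) \<and>
     C t (rnd n (a t)) (rnd n (b t)) \<le> C t (a t) (b t) + 2 * (1/(real n+1))" for n
    using bd[of n] by (simp add: abs_le_iff)
  show "(\<lambda>n. C t (rnd n (a t)) (rnd n (b t))) \<longlonglongrightarrow> C t (a t) (b t)"
  proof (rule tendsto_sandwich[where f="\<lambda>n. C t (a t) (b t) - 2 * (1/(real n+1))" and h="\<lambda>n. C t (a t) (b t) + 2 * (1/(real n+1))"])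
    show "\<forall>\<^sub>F n in sequentially. C t (a t) (b t) - 2 * (1/(real n+1)) \<le> C t (rnd n (a t)) (rnd n (b t))"
      using bd2 by (intro always_eventually allI) blast
    show "\<forall>\<^sub>F n in sequentially. C t (rnd n (a t)) (rnd n (b t)) \<le> C t (a t) (b t) + 2 * (1/(real n+1))"
      using bd2 by (intro always_eventually allI) blast
    show "(\<lambda>n. C t (a t) (b t) - 2 * (1/(real n+1))) \<longlonglongrightarrow> C t (a t) (b t)"
      using tendsto_diff[OF tendsto_const tendsto_mult[OF tendsto_const inv_seq]] by simp
    show "(\<lambda>n. C t (a t) (b t) + 2 * (1/(real n+1))) \<longlonglongrightarrow> C t (a t) (b t)"
      using tendsto_add[OF tendsto_const tendsto_mult[OF tendsto_const inv_seq]] by simp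
  qed
qed



lemma ivl_sets: "{a..b::real} \<in> sets lebesgue" by simp

lemma AE_not01: "AE t in lebesgue. t \<noteq> 0 \<and> t \<noteq> (1::real)"
proof -
  have "{0,1::real} \<in> null_sets lebesgue"
    by (rule null_sets_completionI[OF finite_imp_null_set_lborel]) simp
  from AE_not_in[OF this] show ?thesis by simp
qed

lemma integrable_sub:
  fixes f :: "real \<Rightarrow> real"
  assumes m: "f \<in> borel_measurable (lebesgue_on {0..1})" and bd: "\<And>t. t \<in> {0..1} \<Longrightarrow> \<bar>f t\<bar> \<le> B"
    and v: "v \<in> {0..1}"
  shows "integrable (lebesgue_on {0..v}) f"
proof -
  have fm: "finite_measure (lebesgue_on {0..v})" by (rule finite_measure_lebesgue_on) simp
  have "f \<in> borel_measurable (lebesgue_on {0..v})"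
    by (rule measurable_restrict_mono[OF m]) (use v in auto)
  then show ?thesis
    by (intro finite_measure.integrable_const_bound[OF fm, where B=B])
       (use bd v in \<open>auto intro!: AE_I2 simp: space_restrict_space\<close>)
qed

lemma CMP:
  fixes F G :: "real \<Rightarrow> real"
  assumes Fm: "F \<in> borel_measurable (lebesgue_on {0..1})" and Fb: "\<And>t. t \<in> {0..1} \<Longrightarrow> \<bar>F t\<bar> \<le> B"
    and Gm: "G \<in> borel_measurable (lebesgue_on {0..1})" and Gb: "\<And>t. t \<in> {0..1} \<Longrightarrow> \<bar>G t\<bar> \<le> B'"
    and le: "\<And>t. t \<in> {0<..<1} \<Longrightarrow> F t \<le> G t"
    and v: "v \<in> {0..1}"
  shows "integral\<^sup>L (lebesgue_on {0..v}) F \<le> integral\<^sup>L (lebesgue_on {0..v}) G"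
proof (rule integral_mono_AE)
  show "integrable (lebesgue_on {0..v}) F" by (rule integrable_sub[OF Fm Fb v])
  show "integrable (lebesgue_on {0..v}) G" by (rule integrable_sub[OF Gm Gb v])
  show "AE t in lebesgue_on {0..v}. F t \<le> G t"
  proof -
    have "AE x in lebesgue. x \<in> {0..v} \<longrightarrow> F x \<le> G x"
      using AE_not01 by eventually_elim (use le v in auto)
    moreover have "(AE x in lebesgue_on {0..v}. F x \<le> G x) \<longleftrightarrow> (AE x in lebesgue. x \<in> {0..v} \<longrightarrow> F x \<le> G x)"
      by (rule AE_restrict_space_iff) simp
    ultimately show ?thesis by simp
  qed
qed

lemma CMP2:
  fixes H :: "real \<Rightarrow> real"
  assumes Hm: "H \<in> borel_measurable (lebesgue_on {0..1})" and Hb: "\<And>t. t \<in> {0..1} \<Longrightarrow> \<bar>H t\<bar> \<le> B"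
    and pos: "\<And>t. t \<in> {0<..<1} \<Longrightarrow> 0 \<le> H t"
    and v: "v \<in> {0..1}"
  shows "integral\<^sup>L (lebesgue_on {0..v}) H \<le> integral\<^sup>L (lebesgue_on {0..1}) H"
proof -
  have i1: "integrable (lebesgue_on {0..1}) H" using integrable_sub[OF Hm Hb, of 1] by simp
  hence i1': "integrable lebesgue (\<lambda>x. indicator {0..1} x *\<^sub>R H x)"
    using integrable_restrict_space[of "{0..1::real}" lebesgue H] by simp
  have "integrable lebesgue (\<lambda>x. indicator {0..v} x *\<^sub>R (indicator {0..1} x *\<^sub>R H x))"
    by (rule integrable_mult_indicator[OF _ i1']) simp
  moreover have "(\<lambda>x. indicator {0..v} x *\<^sub>R (indicator {0..1} x *\<^sub>R H x)) = (\<lambda>x. indicator {0..v} x *\<^sub>R H x)"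
    using v by (auto simp: indicator_def fun_eq_iff)
  ultimately have i2': "integrable lebesgue (\<lambda>x. indicator {0..v} x *\<^sub>R H x)" by simp
  have "integral\<^sup>L lebesgue (\<lambda>x. indicator {0..v} x *\<^sub>R H x) \<le> integral\<^sup>L lebesgue (\<lambda>x. indicator {0..1} x *\<^sub>R H x)"
  proof (rule integral_mono_AE[OF i2' i1'])
    show "AE x in lebesgue. indicator {0..v} x *\<^sub>R H x \<le> indicator {0..1} x *\<^sub>R H x"
      using AE_not01 proof eventually_elim
      case (elim x)
      then show ?case using pos[of x] v by (cases "x \<in> {0..v}"; cases "x \<in> {0..1}") (auto simp: indicator_def)
    qed
  qed
  then show ?thesis
    by (simp add: integral_restrict_space)
qed



lemma lip_cont:
  fixes f :: "real \<Rightarrow> real"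
  assumes "\<And>x y. x \<in> S \<Longrightarrow> y \<in> S \<Longrightarrow> \<bar>f x - f y\<bar> \<le> \<bar>x - y\<bar>"
  shows "continuous_on S f"
  unfolding continuous_on_iff
proof (intro ballI allI impI)
  fix x e assume "x \<in> S" "(0::real) < e"
  then show "\<exists>d>0. \<forall>x'\<in>S. dist x' x < d \<longrightarrow> dist (f x') (f x) < e"
    using assms by (intro exI[of _ e]) (force simp: dist_real_def)
qed

definition Fm :: "(real \<Rightarrow> real \<Rightarrow> real \<Rightarrow> real) \<Rightarrow> (real \<Rightarrow> real \<Rightarrow> real) \<Rightarrow> (real \<Rightarrow> real \<Rightarrow> real)
   \<Rightarrow> real \<Rightarrow> real \<Rightarrow> real \<Rightarrow> real" where
  "Fm C A B u1 u3 t = C t (deriv_ae (\<lambda>s. A u1 s) t) (deriv_ae (\<lambda>s. B s u3) t)"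

lemma star_Fm: "star_prod C A B u1 u2 u3 = integral\<^sup>L (lebesgue_on {0..u2}) (Fm C A B u1 u3)"
  unfolding star_prod_def Fm_def[abs_def] ..

lemma dA_range:
  assumes A: "copula2 A" and u: "u \<in> {0..1}" and t: "t \<in> {0<..<1}"
  shows "deriv_ae (\<lambda>s. A u s) t \<in> {0..1}"
  by (rule deriv_range[OF _ _ t]) (use cop_lip2[OF A] u in auto)

lemma dB_range:
  assumes B: "copula2 B" and u: "u \<in> {0..1}" and t: "t \<in> {0<..<1}"
  shows "deriv_ae (\<lambda>s. B s u) t \<in> {0..1}"
  by (rule deriv_range[OF _ _ t]) (use cop_lip1[OF B] u in auto)

lemma dA_meas:
  assumes A: "copula2 A" and u: "u \<in> {0..1}"
  shows "deriv_ae (\<lambda>s. A u s) \<in> borel_measurable (lebesgue_on {0..1})"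
  by (rule deriv_ae_meas01, rule lip_cont) (use cop_abs2[OF A _ _ u] in auto)

lemma dB_meas:
  assumes B: "copula2 B" and u: "u \<in> {0..1}"
  shows "deriv_ae (\<lambda>s. B s u) \<in> borel_measurable (lebesgue_on {0..1})"
  by (rule deriv_ae_meas01, rule lip_cont) (use cop_abs1[OF B _ _ u] in auto)

lemma Fm_props:
  assumes cop: "\<forall>t\<in>{0..1}. copula2 (C t)"
    and Cm: "\<forall>u v. (\<lambda>t. C t u v) \<in> borel_measurable (lebesgue_on {0..1})"
    and A: "copula2 A" and B: "copula2 B" and u1: "u1 \<in> {0..1}" and u3: "u3 \<in> {0..1}"
  shows "Fm C A B u1 u3 \<in> borel_measurable (lebesgue_on {0..1})"
    and "\<exists>Bd. \<forall>t\<in>{0..1}. \<bar>Fm C A B u1 u3 t\<bar> \<le> Bd"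
proof -
  define a where "a = deriv_ae (\<lambda>s. A u1 s)"
  define b where "b = deriv_ae (\<lambda>s. B s u3)"
  have [measurable]: "a \<in> borel_measurable (lebesgue_on {0..1})" unfolding a_def by (rule dA_meas[OF A u1])
  have [measurable]: "b \<in> borel_measurable (lebesgue_on {0..1})" unfolding b_def by (rule dB_meas[OF B u3])
  have ar: "a t \<in> {0..1}" if "t \<in> {0<..<1}" for t unfolding a_def by (rule dA_range[OF A u1 that])
  have br: "b t \<in> {0..1}" if "t \<in> {0<..<1}" for t unfolding b_def by (rule dB_range[OF B u3 that])
  have "(\<lambda>t. C t (max 0 (min 1 (a t))) (max 0 (min 1 (b t)))) \<in> borel_measurable (lebesgue_on {0..1})"
    by (rule cara[OF cop Cm]) auto
  then show "Fm C A B u1 u3 \<in> borel_measurable (lebesgue_on {0..1})"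
    by (rule endpoint_meas) (use ar br in \<open>auto simp: Fm_def a_def b_def\<close>)
  have "\<bar>Fm C A B u1 u3 t\<bar> \<le> max 1 (max \<bar>Fm C A B u1 u3 0\<bar> \<bar>Fm C A B u1 u3 1\<bar>)" if t: "t \<in> {0..1}" for t
  proof (cases "t \<in> {0<..<1}")
    case True
    have "copula2 (C t)" using cop t by blast
    hence "0 \<le> Fm C A B u1 u3 t" "Fm C A B u1 u3 t \<le> 1"
      using cop_range[of "C t" "a t" "b t"] ar[OF True] br[OF True] by (auto simp: Fm_def a_def b_def)
    then show ?thesis by auto
  next
    case False
    hence "t = 0 \<or> t = 1" using t by auto
    then show ?thesis by auto
  qed
  then show "\<exists>Bd. \<forall>t\<in>{0..1}. \<bar>Fm C A B u1 u3 t\<bar> \<le> Bd" by blast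
qed

lemma deriv_ae_id: "t \<in> {0<..<1} \<Longrightarrow> (\<forall>x\<in>{0<..<1}. f x = x) \<Longrightarrow> deriv_ae f t = 1"
proof -
  assume t: "t \<in> {0<..<1}" and f: "\<forall>x\<in>{0<..<1}. f x = x"
  have "deriv_ae f t = deriv_ae (\<lambda>x. x) t"
    by (rule deriv_ae_local[of "{0<..<1}"]) (use t f in auto)
  also have "\<dots> = 1"
  proof -
    have d: "DERIV (\<lambda>x. x) t :> 1" by (rule DERIV_ident)
    hence "(\<lambda>x. x) differentiable at t" using real_differentiable_def by blast
    moreover have "deriv (\<lambda>x. x) t = 1" using DERIV_imp_deriv[OF d] .
    ultimately show ?thesis by (simp add: deriv_ae_def)
  qed
  finally show ?thesis .
qed



lemma Fm_x1:
  assumes cop: "\<forall>t\<in>{0..1}. copula2 (C t)" and A: "copula2 A" and B: "copula2 B"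
    and x: "x \<in> {0..1}" and t: "t \<in> {0<..<1}"
  shows "Fm C A B x 1 t = deriv_ae (\<lambda>s. A x s) t"
proof -
  have "deriv_ae (\<lambda>s. B s 1) t = 1" by (rule deriv_ae_id[OF t]) (use cop_bd(3)[OF B] in auto)
  moreover have "copula2 (C t)" using cop t by auto
  ultimately show ?thesis using cop_bd(3)[of "C t" "deriv_ae (\<lambda>s. A x s) t"] dA_range[OF A x t]
    by (simp add: Fm_def)
qed

lemma Fm_1y:
  assumes cop: "\<forall>t\<in>{0..1}. copula2 (C t)" and A: "copula2 A" and B: "copula2 B"
    and y: "y \<in> {0..1}" and t: "t \<in> {0<..<1}"
  shows "Fm C A B 1 y t = deriv_ae (\<lambda>s. B s y) t"
proof -
  have "deriv_ae (\<lambda>s. A 1 s) t = 1" by (rule deriv_ae_id[OF t]) (use cop_bd(4)[OF A] in auto)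
  moreover have "copula2 (C t)" using cop t by auto
  ultimately show ?thesis using cop_bd(4)[of "C t" "deriv_ae (\<lambda>s. B s y) t"] dB_range[OF B y t]
    by (simp add: Fm_def)
qed

theorem proposition3p4:
  fixes C C' :: "real \<Rightarrow> real \<Rightarrow> real \<Rightarrow> real"
    and A B :: "real \<Rightarrow> real \<Rightarrow> real"
  assumes "\<forall>t\<in>{0..1}. copula2 (C t)"
    and "\<forall>t\<in>{0..1}. copula2 (C' t)"
    and "\<forall>u v. (\<lambda>t. C t u v) \<in> borel_measurable (lebesgue_on {0..1})"
    and "\<forall>u v. (\<lambda>t. C' t u v) \<in> borel_measurable (lebesgue_on {0..1})"
    and "\<forall>t\<in>{0..1}. copula2_le (C t) (C' t)"
    and "copula2 A" and "copula2 B"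
  shows "conc_le3 (star_prod C A B) (star_prod C' A B)"
proof -
  note cop = assms(1) and cop' = assms(2) and Cm = assms(3) and Cm' = assms(4) and le = assms(5)
    and A = assms(6) and B = assms(7)
  note P = Fm_props[OF cop Cm A B] and P' = Fm_props[OF cop' Cm' A B]
  have ptle: "Fm C A B x y t \<le> Fm C' A B x y t" if "x \<in> {0..1}" "y \<in> {0..1}" "t \<in> {0<..<1}" for x y t
    using le that dA_range[OF A that(1,3)] dB_range[OF B that(2,3)]
    unfolding Fm_def copula2_le_def by auto
  have LE: "integral\<^sup>L (lebesgue_on {0..v}) (Fm C A B x y) \<le> integral\<^sup>L (lebesgue_on {0..v}) (Fm C' A B x y)"
    if x: "x \<in> {0..1}" and y: "y \<in> {0..1}" and v: "v \<in> {0..1}" for x y v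
  proof -
    obtain b1 where b1: "\<forall>t\<in>{0..1}. \<bar>Fm C A B x y t\<bar> \<le> b1" using P(2)[OF x y] by blast
    obtain b2 where b2: "\<forall>t\<in>{0..1}. \<bar>Fm C' A B x y t\<bar> \<le> b2" using P'(2)[OF x y] by blast
    show ?thesis by (rule CMP[OF P(1)[OF x y] _ P'(1)[OF x y] _ _ v]) (use b1 b2 ptle x y in auto)
  qed
  have EQ: "integral\<^sup>L (lebesgue_on {0..v}) (Fm C A B x y) = integral\<^sup>L (lebesgue_on {0..v}) (Fm C' A B x y)"
    if x: "x \<in> {0..1}" and y: "y \<in> {0..1}" and v: "v \<in> {0..1}"
      and eq: "\<And>t. t \<in> {0<..<1} \<Longrightarrow> Fm C A B x y t = Fm C' A B x y t" for x y v
  proof -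
    obtain b1 where b1: "\<forall>t\<in>{0..1}. \<bar>Fm C A B x y t\<bar> \<le> b1" using P(2)[OF x y] by blast
    obtain b2 where b2: "\<forall>t\<in>{0..1}. \<bar>Fm C' A B x y t\<bar> \<le> b2" using P'(2)[OF x y] by blast
    have "integral\<^sup>L (lebesgue_on {0..v}) (Fm C' A B x y) \<le> integral\<^sup>L (lebesgue_on {0..v}) (Fm C A B x y)"
      by (rule CMP[OF P'(1)[OF x y] _ P(1)[OF x y] _ _ v]) (use b1 b2 eq in auto)
    then show ?thesis using LE[OF x y v] by linarith
  qed
  show ?thesis
    unfolding conc_le3_def
  proof (intro ballI conjI)
    fix u1 u2 u3 :: real assume u1: "u1 \<in> {0..1}" and u2: "u2 \<in> {0..1}" and u3: "u3 \<in> {0..1}"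
    show "star_prod C A B u1 u2 u3 \<le> star_prod C' A B u1 u2 u3"
      unfolding star_Fm by (rule LE[OF u1 u3 u2])
    have one: "(1::real) \<in> {0..1}" by simp
    have e1: "star_prod C A B u1 u2 1 = star_prod C' A B u1 u2 1"
      unfolding star_Fm
      by (rule EQ[OF u1 one u2]) (simp add: Fm_x1[OF cop A B u1] Fm_x1[OF cop' A B u1])
    have e2: "star_prod C A B 1 u2 u3 = star_prod C' A B 1 u2 u3"
      unfolding star_Fm
      by (rule EQ[OF one u3 u2]) (simp add: Fm_1y[OF cop A B u3] Fm_1y[OF cop' A B u3])
    obtain b1 where b1: "\<forall>t\<in>{0..1}. \<bar>Fm C A B u1 u3 t\<bar> \<le> b1" using P(2)[OF u1 u3] by blast
    obtain b2 where b2: "\<forall>t\<in>{0..1}. \<bar>Fm C' A B u1 u3 t\<bar> \<le> b2" using P'(2)[OF u1 u3] by blast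
    define H where "H t = Fm C' A B u1 u3 t - Fm C A B u1 u3 t" for t
    have Hm: "H \<in> borel_measurable (lebesgue_on {0..1})"
      unfolding H_def[abs_def] using P(1)[OF u1 u3] P'(1)[OF u1 u3] by measurable
    have Hb: "\<bar>H t\<bar> \<le> b1 + b2" if "t \<in> {0..1}" for t
      using b1 b2 that unfolding H_def by force
    have "integral\<^sup>L (lebesgue_on {0..u2}) H \<le> integral\<^sup>L (lebesgue_on {0..1}) H"
      by (rule CMP2[OF Hm Hb _ u2]) (use ptle u1 u3 in \<open>auto simp: H_def\<close>)
    moreover have "integral\<^sup>L (lebesgue_on {0..v}) H =
        integral\<^sup>L (lebesgue_on {0..v}) (Fm C' A B u1 u3) - integral\<^sup>L (lebesgue_on {0..v}) (Fm C A B u1 u3)"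
      if v: "v \<in> {0..1}" for v
      unfolding H_def
      by (rule Bochner_Integration.integral_diff)
         (use integrable_sub[OF P'(1)[OF u1 u3] _ v, of b2] integrable_sub[OF P(1)[OF u1 u3] _ v, of b1] b1 b2 in auto)
    ultimately have "star_prod C A B u1 1 u3 - star_prod C A B u1 u2 u3 \<le> star_prod C' A B u1 1 u3 - star_prod C' A B u1 u2 u3"
      unfolding star_Fm using u2 one by fastforce
    then show "surv3 (star_prod C A B) u1 u2 u3 \<le> surv3 (star_prod C' A B) u1 u2 u3"
      unfolding surv3_def using e1 e2 by linarith
  qed
qed

end
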